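(* For the opinion--action model described in the context with $\phi\in(0,1)$ and any initial values, there exists a constant $\alpha>0$ such that for all $i,j\in\{1,\dots,2n\}$ and all $t\ge1$, if $p_{ij}(t)>0$ then $p_{ij}(t)\ge\alpha$, where $p_{ij}(t)$ denotes the $(i,j)$ entry of $P(t)$.
   Context: Fix an integer $n\ge 1$, $\mathcal{V}=\{1,\dots,n\}$, $\epsilon\in[0,1]$ and $\phi\in[0,1]$. Opinions $x_i(t)$ and actions $y_i(t)$ evolve for $t\in\mathbb{Z}_{\ge0}$ by: $\mathcal{N}_i(t)=\{j\in\mathcal{V}\mid j\neq i,\ |x_i(t)-y_j(t)|\le\epsilon\}$; $x_i(t+1)=\frac{x_i(t)+\sum_{j\in\mathcal{N}_i(t)}y_j(t)}{|\mathcal{N}_i(t)|+1}$; $y_i(t+1)=\phi\,x_i(t+1)+\frac{1-\phi}{n}\sum_{k=1}^n y_k(t)$, with initial values in $[0,1]$. For $t\ge1$, $P(t)=\begin{bmatrix}P_{11}(t)&P_{12}(t)\\ P_{21}&P_{22}\end{bmatrix}\in\mathbb{R}^{2n\times2n}$ with $n\times n$ blocks $[P_{11}(t)]_{ij}=\frac{1}{|\mathcal{N}_i(t)|+1}$ if $j=i$, $\frac{\phi}{|\mathcal{N}_i(t)|+1}$ if $j\in\mathcal{N}_i(t)$, $0$ otherwise; $[P_{12}(t)]_{ij}=\frac{(1-\phi)|\mathcal{N}_i(t)|}{(|\mathcal{N}_i(t)|+1)n}$ for all $i,j$; $P_{21}=\phi I_n$; $P_{22}=\frac{1-\phi}{n}\mathbf{1}_n\mathbf{1}_n^\top$.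 *)

theory Defs
  imports "HOL-Analysis.Analysis"
begin

text \<open>Agents are indexed by 0..n-1 (the paper's 1..n shifted by one);
  states are functions nat => real, only values below n matter.\<close>

definition nbrs :: "nat \<Rightarrow> real \<Rightarrow> (nat \<Rightarrow> real) \<Rightarrow> (nat \<Rightarrow> real) \<Rightarrow> nat \<Rightarrow> nat set" where
  "nbrs n \<epsilon> x y i = {j. j < n \<and> j \<noteq> i \<and> \<bar>x i - y j\<bar> \<le> \<epsilon>}"

definition step :: "nat \<Rightarrow> real \<Rightarrow> real \<Rightarrow> (nat \<Rightarrow> real) \<times> (nat \<Rightarrow> real)
    \<Rightarrow> (nat \<Rightarrow> real) \<times> (nat \<Rightarrow> real)" where
  "step n \<epsilon> \<phi> s =
    (let x = fst s; y = snd s;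
         x' = (\<lambda>i. (x i + (\<Sum>j\<in>nbrs n \<epsilon> x y i. y j)) / (real (card (nbrs n \<epsilon> x y i)) + 1));
         y' = (\<lambda>i. \<phi> * x' i + (1 - \<phi>) / real n * (\<Sum>k<n. y k))
     in (x', y'))"

fun traj :: "nat \<Rightarrow> real \<Rightarrow> real \<Rightarrow> (nat \<Rightarrow> real) \<Rightarrow> (nat \<Rightarrow> real) \<Rightarrow> nat
    \<Rightarrow> (nat \<Rightarrow> real) \<times> (nat \<Rightarrow> real)" where
  "traj n \<epsilon> \<phi> x0 y0 0 = (x0, y0)"
| "traj n \<epsilon> \<phi> x0 y0 (Suc t) = step n \<epsilon> \<phi> (traj n \<epsilon> \<phi> x0 y0 t)"

definition Nset :: "nat \<Rightarrow> real \<Rightarrow> real \<Rightarrow> (nat \<Rightarrow> real) \<Rightarrow> (nat \<Rightarrow> real) \<Rightarrow> nat \<Rightarrow> nat \<Rightarrow> nat set" where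
  "Nset n \<epsilon> \<phi> x0 y0 t i =
     (let s = traj n \<epsilon> \<phi> x0 y0 t in nbrs n \<epsilon> (fst s) (snd s) i)"

text \<open>Entry (i,j) of P(t), with 0-based indices i,j < 2n
  (row/column index < n: first block, otherwise second block).\<close>
definition Pmat :: "nat \<Rightarrow> real \<Rightarrow> real \<Rightarrow> (nat \<Rightarrow> real) \<Rightarrow> (nat \<Rightarrow> real) \<Rightarrow> nat \<Rightarrow> nat \<Rightarrow> nat \<Rightarrow> real" where
  "Pmat n \<epsilon> \<phi> x0 y0 t i j =
    (if i < n then
       (let N = Nset n \<epsilon> \<phi> x0 y0 t i; d = real (card N) + 1 in
        if j < n then (if j = i then 1 / d else if j \<in> N then \<phi> / d else 0)
        else (1 - \<phi>) * real (card N) / (d * real n))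
     else
       (if j < n then (if j = i - n then \<phi> else 0)
        else (1 - \<phi>) / real n))"

end

theory Submission
  imports Defs
begin

lemma abds:
  fixes n \<phi> :: real assumes "1 \<le> n" "0 < \<phi>" "\<phi> < 1"
  shows "\<phi> * (1 - \<phi>) / (2 * (n + 1)) \<le> 1 / (n + 1)"
    and "\<phi> * (1 - \<phi>) / (2 * (n + 1)) \<le> \<phi> / (n + 1)"
    and "\<phi> * (1 - \<phi>) / (2 * (n + 1)) \<le> \<phi>"
    and "\<phi> * (1 - \<phi>) / (2 * (n + 1)) \<le> (1 - \<phi>) / n"
    and "\<phi> * (1 - \<phi>) / (2 * (n + 1)) \<le> (1 - \<phi>) / n * (1/2)"
proof -
  have k1: "\<phi> * (1 - \<phi>) \<le> \<phi>" using assms by (simp add: mult_left_le)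
  have k2: "\<phi> * (1 - \<phi>) \<le> 1 - \<phi>" using assms by (simp add: mult_left_le_one_le)
  have p: "0 < n + 1" "0 < n" using assms by auto
  have e: "\<phi> * (1 - \<phi>) / (2 * (n + 1)) = (\<phi> * (1 - \<phi>) / 2) / (n + 1)" by simp
  show "\<phi> * (1 - \<phi>) / (2 * (n + 1)) \<le> 1 / (n + 1)" unfolding e
    by (rule divide_right_mono) (use k1 assms in linarith, use p in linarith)
  show "\<phi> * (1 - \<phi>) / (2 * (n + 1)) \<le> \<phi> / (n + 1)" unfolding e
    by (rule divide_right_mono) (use k1 assms in auto)
  show "\<phi> * (1 - \<phi>) / (2 * (n + 1)) \<le> \<phi>" unfolding e
    using k1 assms p by (simp add: divide_le_eq)
  have "\<phi> * (1 - \<phi>) / (2 * (n + 1)) \<le> (1 - \<phi>) / (2 * (n + 1))"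
    by (rule divide_right_mono) (use k2 p in auto)
  also have "\<dots> \<le> (1 - \<phi>) / (2 * n)"
    by (rule divide_left_mono) (use assms in auto)
  finally have f: "\<phi> * (1 - \<phi>) / (2 * (n + 1)) \<le> (1 - \<phi>) / (2 * n)" .
  then show "\<phi> * (1 - \<phi>) / (2 * (n + 1)) \<le> (1 - \<phi>) / n * (1/2)" by simp
  have "(1 - \<phi>) / (2 * n) \<le> (1 - \<phi>) / n"
    by (rule divide_left_mono) (use assms in auto)
  with f show "\<phi> * (1 - \<phi>) / (2 * (n + 1)) \<le> (1 - \<phi>) / n" by simp
qed
lemma fb:
  fixes c n :: real and \<phi> :: real
  assumes "1 \<le> c" "c \<le> n" "0 < \<phi>" "\<phi> < 1"
  shows "(1 - \<phi>) / n * (1/2) \<le> (1 - \<phi>) * c / ((c + 1) * n)"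
proof -
  have "(1 - \<phi>) * c / ((c + 1) * n) = (1-\<phi>) / n * (c / (c+1))" by simp
  moreover have "c / (c+1) \<ge> 1/2" using assms by (simp add: field_simps)
  moreover have "(1-\<phi>)/n \<ge> 0" using assms by simp
  ultimately show ?thesis by (metis mult_left_mono)
qed

lemma card_N_le: "card (Nset n \<epsilon> \<phi> x0 y0 t i) \<le> n"
proof -
  have "Nset n \<epsilon> \<phi> x0 y0 t i \<subseteq> {..<n}"
    by (auto simp: Nset_def nbrs_def Let_def)
  then show ?thesis by (metis card_lessThan card_mono finite_lessThan)
qed

theorem lemma2:
  fixes n :: nat and \<epsilon> \<phi> :: real and x0 y0 :: "nat \<Rightarrow> real"
  assumes "n \<ge> 1"
    and "0 \<le> \<epsilon>" and "\<epsilon> \<le> 1"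
    and "0 < \<phi>" and "\<phi> < 1"
    and "\<forall>i<n. 0 \<le> x0 i \<and> x0 i \<le> 1"
    and "\<forall>i<n. 0 \<le> y0 i \<and> y0 i \<le> 1"
  shows "\<exists>\<alpha>>0. \<forall>i<2*n. \<forall>j<2*n. \<forall>t\<ge>1.
           Pmat n \<epsilon> \<phi> x0 y0 t i j > 0 \<longrightarrow> Pmat n \<epsilon> \<phi> x0 y0 t i j \<ge> \<alpha>"
proof (intro exI[of _ "\<phi> * (1 - \<phi>) / (2 * (real n + 1))"] conjI allI impI)
  show "0 < \<phi> * (1 - \<phi>) / (2 * (real n + 1))" using assms by simp
  fix i j t
  assume "i < 2*n" "j < 2*n" "1 \<le> t" and pos: "0 < Pmat n \<epsilon> \<phi> x0 y0 t i j"
  define c where "c = real (card (Nset n \<epsilon> \<phi> x0 y0 t i))"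
  have cn: "c \<le> real n" unfolding c_def using card_N_le by simp
  have c0: "0 \<le> c" unfolding c_def by simp
  have nr: "1 \<le> real n" using assms by simp
  let ?a = "\<phi> * (1 - \<phi>) / (2 * (real n + 1))"
  note A = abds[OF nr assms(4,5)]
  have d1: "1 / (c + 1) \<ge> 1 / (real n + 1)" using cn c0 by (simp add: frac_le)
  have d2: "\<phi> / (c + 1) \<ge> \<phi> / (real n + 1)" using cn c0 assms by (simp add: frac_le)
  show "?a \<le> Pmat n \<epsilon> \<phi> x0 y0 t i j"
  proof (cases "i < n")
    case True
    show ?thesis
    proof (cases "j < n")
      case True
      then show ?thesis using \<open>i < n\<close> pos A(1,2) d1 d2
        unfolding Pmat_def c_def[symmetric] Let_def by (auto split: if_splits)
    next
      case False
      have "c \<noteq> 0" using pos \<open>i < n\<close> False unfolding Pmat_def c_def[symmetric] Let_def by auto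
      then have "1 \<le> c" unfolding c_def by simp
      then have "?a \<le> (1 - \<phi>) * c / ((c + 1) * real n)"
        using fb[of c "real n" \<phi>] cn assms A(5) by linarith
      then show ?thesis using \<open>i < n\<close> False
        unfolding Pmat_def c_def[symmetric] Let_def by auto
    qed
  next
    case False
    then show ?thesis using pos A(3,4) unfolding Pmat_def by (auto split: if_splits)
  qed
qed

end
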